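(* Consider the opinion--action model described in the context, with $\phi\in(0,1)$ and arbitrary initial values $x_i(0),y_i(0)\in[0,1]$, and let $P(t)$, $t\ge 1$, be its augmented state matrices and $\mathbf{z}(t)$ its augmented state. Suppose there exists a finite time $T\in\mathbb{Z}_{>0}$ after which the structure of the digraph $\mathcal{G}(P(t))$ stabilizes, i.e., for all $t\ge T$, $\mathcal{G}(P(t))$ has a fixed number of strongly connected components and the node set of each strongly connected component is the same for all $t\ge T$. Then the system converges to one of the following steady states: (i) Consensus: if $\mathcal{G}(P(t))$ remains strongly connected (for $t\ge T$), then for every $i\in\{1,\dots,2n\}$ the limit $z_i^\ast=\lim_{t\to\infty}z_i(t)$ exists and $z_i^\ast=z_j^\ast$ for all $i,j\in\{1,\dots,2n\}$. (ii) Clustering: if the condensation digraph of $\mathcal{G}(P(t))$ (for $t\ge T$) consists of one sink and one or more singleton sources, then, letting $\Theta$ be the set of nodes forming singleton sources and $\Omega$ the set of nodes of the sink component, $z_i(t)=z_i(T)$ for all $i\in\Theta$ and all $t\ge T$, and $\lim_{t\to\infty}\mathrm{dist}\big(z_j(t),\operatorname{conv}\{z_i(T)\mid i\in\Theta\}\big)=0$ for all $j\in\Omega$.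
   Context: Fix an integer $n\ge 1$, agent set $\mathcal{V}=\{1,\dots,n\}$, a confidence threshold $\epsilon\in[0,1]$ and a decision weight $\phi\in[0,1]$. Each agent $i$ has opinion $x_i(t)\in[0,1]$ and action $y_i(t)\in[0,1]$. For $t\in\mathbb{Z}_{\ge0}$ the model evolves by: $\mathcal{N}_i(t)=\{j\in\mathcal{V}\mid j\neq i,\ |x_i(t)-y_j(t)|\le\epsilon\}$; $x_i(t+1)=\frac{x_i(t)+\sum_{j\in\mathcal{N}_i(t)}y_j(t)}{|\mathcal{N}_i(t)|+1}$; $y_i(t+1)=\phi\,x_i(t+1)+(1-\phi)\,y_{\mathrm{avg}}(t)$ with $y_{\mathrm{avg}}(t)=\frac1n\sum_{k=1}^n y_k(t)$. For $t\ge1$ the augmented state is $\mathbf{z}(t)\in\mathbb{R}^{2n}$ with $z_i(t)=x_i(t)$ and $z_{n+i}(t)=y_i(t-1)$ for $i\in\mathcal{V}$; it satisfies $\mathbf{z}(t+1)=P(t)\mathbf{z}(t)$ for $t\ge1$, where $P(t)=\begin{bmatrix}P_{11}(t)&P_{12}(t)\\ P_{21}&P_{22}\end{bmatrix}$ with $n\times n$ blocks: $[P_{11}(t)]_{ij}=\frac{1}{|\mathcal{N}_i(t)|+1}$ if $j=i$, $\frac{\phi}{|\mathcal{N}_i(t)|+1}$ if $j\in\mathcal{N}_i(t)$, and $0$ otherwise; $[P_{12}(t)]_{ij}=\frac{(1-\phi)|\mathcal{N}_i(t)|}{(|\mathcal{N}_i(t)|+1)n}$ for all $i,j$; $P_{21}=\phi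 I_n$; $P_{22}=\frac{1-\phi}{n}\mathbf{1}_n\mathbf{1}_n^\top$. For a nonnegative matrix $A\in\mathbb{R}^{m\times m}$, $\mathcal{G}(A)$ is the digraph on $\{1,\dots,m\}$ with a directed edge $(j,i)$ (from $j$ to $i$) iff $a_{ij}>0$. A strongly connected component (SCC) is a maximal strongly connected subgraph; the condensation digraph has the SCCs as nodes and an edge from SCC$_a$ to SCC$_b$ ($a\ne b$) iff some node of SCC$_a$ has an edge to some node of SCC$_b$. A source is a node with no incoming edges, a sink a node with no outgoing edges; a singleton SCC has one node. $\operatorname{conv}$ denotes convex hull and $\mathrm{dist}(x,S)=\inf_{y\in S}|x-y|$. *)

theory Defs
  imports "HOL-Analysis.Analysis"
begin

text \<open>Agents are indexed 0..n-1 (paper: 1..n); augmented indices 0..2n-1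
  (paper: 1..2n), index i < n is x_i, index n+i is the y-component.\<close>

definition nbrs :: "nat \<Rightarrow> real \<Rightarrow> (nat \<Rightarrow> real) \<Rightarrow> (nat \<Rightarrow> real) \<Rightarrow> nat \<Rightarrow> nat set" where
  "nbrs n eps x y i = {j. j < n \<and> j \<noteq> i \<and> \<bar>x i - y j\<bar> \<le> eps}"

definition step :: "nat \<Rightarrow> real \<Rightarrow> real \<Rightarrow> (nat \<Rightarrow> real) \<times> (nat \<Rightarrow> real)
    \<Rightarrow> (nat \<Rightarrow> real) \<times> (nat \<Rightarrow> real)" where
  "step n eps phi s =
     (let x = fst s; y = snd s;
          x' = (\<lambda>i. (x i + (\<Sum>j\<in>nbrs n eps x y i. y j)) / (real (card (nbrs n eps x y i)) + 1))
      in (x', \<lambda>i. phi * x' i + (1 - phi) * ((\<Sum>k<n. y k) / real n)))"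

primrec traj :: "nat \<Rightarrow> real \<Rightarrow> real \<Rightarrow> (nat \<Rightarrow> real) \<Rightarrow> (nat \<Rightarrow> real) \<Rightarrow> nat
    \<Rightarrow> (nat \<Rightarrow> real) \<times> (nat \<Rightarrow> real)" where
  "traj n eps phi x0 y0 0 = (x0, y0)"
| "traj n eps phi x0 y0 (Suc t) = step n eps phi (traj n eps phi x0 y0 t)"

definition xs where "xs n eps phi x0 y0 t = fst (traj n eps phi x0 y0 t)"
definition ys where "ys n eps phi x0 y0 t = snd (traj n eps phi x0 y0 t)"

text \<open>augmented state z(t), meaningful for t \<ge> 1\<close>
definition zaug :: "nat \<Rightarrow> real \<Rightarrow> real \<Rightarrow> (nat \<Rightarrow> real) \<Rightarrow> (nat \<Rightarrow> real) \<Rightarrow> nat \<Rightarrow> nat \<Rightarrow> real" where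
  "zaug n eps phi x0 y0 t i =
     (if i < n then xs n eps phi x0 y0 t i else ys n eps phi x0 y0 (t - 1) (i - n))"

definition Pmat :: "nat \<Rightarrow> real \<Rightarrow> real \<Rightarrow> (nat \<Rightarrow> real) \<Rightarrow> (nat \<Rightarrow> real) \<Rightarrow> nat \<Rightarrow> nat \<Rightarrow> nat \<Rightarrow> real" where
  "Pmat n eps phi x0 y0 t i j =
     (let N = nbrs n eps (xs n eps phi x0 y0 t) (ys n eps phi x0 y0 t) in
      if i < n \<and> j < n then
        (if j = i then 1 / (real (card (N i)) + 1)
         else if j \<in> N i then phi / (real (card (N i)) + 1) else 0)
      else if i < n \<and> n \<le> j \<and> j < 2 * n then
        (1 - phi) * real (card (N i)) / ((real (card (N i)) + 1) * real n)
      else if n \<le> i \<and> i < 2 * n \<and> j < n then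
        (if j = i - n then phi else 0)
      else if n \<le> i \<and> i < 2 * n \<and> n \<le> j \<and> j < 2 * n then
        (1 - phi) / real n
      else 0)"

definition gedges :: "(nat \<Rightarrow> nat \<Rightarrow> real) \<Rightarrow> nat \<Rightarrow> (nat \<times> nat) set" where
  "gedges A m = {(j, i). j < m \<and> i < m \<and> A i j > 0}"

definition strongly_connected_mat :: "(nat \<Rightarrow> nat \<Rightarrow> real) \<Rightarrow> nat \<Rightarrow> bool" where
  "strongly_connected_mat A m = (\<forall>i<m. \<forall>j<m. (i, j) \<in> (gedges A m)\<^sup>*)"

definition scc_of :: "(nat \<Rightarrow> nat \<Rightarrow> real) \<Rightarrow> nat \<Rightarrow> nat \<Rightarrow> nat set" where
  "scc_of A m i = {j. j < m \<and> (i, j) \<in> (gedges A m)\<^sup>* \<and> (j, i) \<in> (gedges A m)\<^sup>*}"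

definition sccs :: "(nat \<Rightarrow> nat \<Rightarrow> real) \<Rightarrow> nat \<Rightarrow> nat set set" where
  "sccs A m = scc_of A m ` {..<m}"

definition cond_edge :: "(nat \<Rightarrow> nat \<Rightarrow> real) \<Rightarrow> nat \<Rightarrow> nat set \<Rightarrow> nat set \<Rightarrow> bool" where
  "cond_edge A m S S' = (S \<noteq> S' \<and> (\<exists>a\<in>S. \<exists>b\<in>S'. (a, b) \<in> gedges A m))"

definition cond_source :: "(nat \<Rightarrow> nat \<Rightarrow> real) \<Rightarrow> nat \<Rightarrow> nat set \<Rightarrow> bool" where
  "cond_source A m S = (\<forall>S'\<in>sccs A m. \<not> cond_edge A m S' S)"

definition cond_sink :: "(nat \<Rightarrow> nat \<Rightarrow> real) \<Rightarrow> nat \<Rightarrow> nat set \<Rightarrow> bool" where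
  "cond_sink A m S = (\<forall>S'\<in>sccs A m. \<not> cond_edge A m S S')"

definition one_sink_singleton_sources :: "(nat \<Rightarrow> nat \<Rightarrow> real) \<Rightarrow> nat \<Rightarrow> nat set \<Rightarrow> bool" where
  "one_sink_singleton_sources A m \<Omega> =
     (\<Omega> \<in> sccs A m \<and> cond_sink A m \<Omega> \<and>
      (\<forall>S\<in>sccs A m. cond_sink A m S \<longrightarrow> S = \<Omega>) \<and>
      (\<forall>S\<in>sccs A m. S \<noteq> \<Omega> \<longrightarrow> card S = 1 \<and> cond_source A m S) \<and>
      (\<exists>S\<in>sccs A m. S \<noteq> \<Omega>))"

end

theory Submission
  imports Defs
begin

locale sys =
  fixes n :: nat and phi :: real and X Y :: "nat \<Rightarrow> nat \<Rightarrow> real" and N :: "nat \<Rightarrow> nat \<Rightarrow> nat set"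
  assumes n1: "n \<ge> 1" and phi0: "0 < phi" and phi1: "phi < 1"
  and hN: "\<And>t i. N t i \<subseteq> {..<n}"
  and hX: "\<And>t i. i < n \<Longrightarrow> X (Suc t) i = (X t i + (\<Sum>j\<in>N t i. Y t j)) / (real (card (N t i)) + 1)"
  and hY: "\<And>t i. i < n \<Longrightarrow> Y (Suc t) i = phi * X (Suc t) i + (1 - phi) * ((\<Sum>k<n. Y t k) / real n)"
begin

lemma finN: "finite (N t i)" using hN finite_subset by blast

definition "A s = (\<Sum>k<n. Y s k) / real n"
definition "M s = Max (X (Suc s) ` {..<n} \<union> Y s ` {..<n})"

lemma M_ge: assumes "k<n" shows "X (Suc s) k \<le> M s" "Y s k \<le> M s"
  unfolding M_def using assms by (auto intro!: Max_ge)

lemma M_le: assumes "\<And>k. k<n \<Longrightarrow> X (Suc s) k \<le> u" "\<And>k. k<n \<Longrightarrow> Y s k \<le> u" shows "M s \<le> u"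
proof -
  have "{..<n} \<noteq> {}" using n1 by (auto simp: lessThan_empty_iff)
  then show ?thesis unfolding M_def using assms by (subst Max_le_iff) auto
qed

lemma A_le: assumes "\<And>k. k<n \<Longrightarrow> Y s k \<le> u" shows "A s \<le> u"
proof -
  have "(\<Sum>k<n. Y s k) \<le> (\<Sum>k<n. u)" by (rule sum_mono) (use assms in auto)
  then have "(\<Sum>k<n. Y s k) \<le> real n * u" by simp
  then show ?thesis unfolding A_def using n1 by (simp add: pos_divide_le_eq mult.commute)
qed

lemma A_le_M: "A s \<le> M s" by (rule A_le) (rule M_ge)

lemma Y_step: "i<n \<Longrightarrow> Y (Suc s) i = phi * X (Suc s) i + (1-phi) * A s"
  using hY A_def by simp

lemma X_iso: "i<n \<Longrightarrow> N t i = {} \<Longrightarrow> X (Suc t) i = X t i" using hX by simp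

lemma X_bound:
  assumes i: "i<n" and hx: "\<And>k. k<n \<Longrightarrow> X (Suc s) k \<le> u" and hA: "A s \<le> u"
  shows "X (Suc (Suc s)) i \<le> u"
    and "N (Suc s) i \<noteq> {} \<Longrightarrow> X (Suc (Suc s)) i \<le> (1 - (1-phi)/2) * u + ((1-phi)/2) * A s"
proof -
  define K where "K = real (card (N (Suc s) i))"
  have sumY: "(\<Sum>j\<in>N (Suc s) i. Y (Suc s) j) \<le> K * (phi * u + (1-phi) * A s)"
  proof -
    have "(\<Sum>j\<in>N (Suc s) i. Y (Suc s) j) \<le> (\<Sum>j\<in>N (Suc s) i. phi * u + (1-phi) * A s)"
    proof (rule sum_mono)
      fix j assume "j \<in> N (Suc s) i" then have "j<n" using hN by blast
      then show "Y (Suc s) j \<le> phi * u + (1-phi) * A s" using Y_step hx[of j] phi0 by (simp add: mult_left_mono)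
    qed
    then show ?thesis by (simp add: K_def)
  qed
  have eq: "X (Suc (Suc s)) i = (X (Suc s) i + (\<Sum>j\<in>N (Suc s) i. Y (Suc s) j)) / (K + 1)"
    using hX[OF i] K_def by simp
  have K0: "K \<ge> 0" by (simp add: K_def)
  have num: "X (Suc s) i + (\<Sum>j\<in>N (Suc s) i. Y (Suc s) j) \<le> (K+1)*u - K*((1-phi)*(u - A s))"
    using hx[OF i] sumY by (simp add: algebra_simps)
  have nn: "(1-phi)*(u - A s) \<ge> 0" using phi1 hA by simp
  show "X (Suc (Suc s)) i \<le> u"
  proof -
    have "K*((1-phi)*(u - A s)) \<ge> 0" using K0 nn by simp
    then have "X (Suc s) i + (\<Sum>j\<in>N (Suc s) i. Y (Suc s) j) \<le> (K+1)*u" using num by linarith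
    then show ?thesis unfolding eq using K0 by (simp add: pos_divide_le_eq mult.commute)
  qed
  assume ne: "N (Suc s) i \<noteq> {}"
  then have "card (N (Suc s) i) \<ge> 1" using finN by (simp add: Suc_le_eq card_gt_0_iff)
  then have K1: "K \<ge> 1" by (simp add: K_def)
  have "K*((1-phi)*(u - A s)) \<ge> ((K+1)/2)*((1-phi)*(u - A s))"
    using K1 nn by (intro mult_right_mono) auto
  then have "X (Suc s) i + (\<Sum>j\<in>N (Suc s) i. Y (Suc s) j) \<le> (K+1)*u - ((K+1)/2)*((1-phi)*(u - A s))"
    using num by linarith
  also have "(K+1)*u - ((K+1)/2)*((1-phi)*(u - A s)) = (K+1)*((1 - (1-phi)/2) * u + ((1-phi)/2) * A s)"
    by (simp add: field_simps)
  finally have "X (Suc s) i + (\<Sum>j\<in>N (Suc s) i. Y (Suc s) j) \<le> (K+1)*((1 - (1-phi)/2) * u + ((1-phi)/2) * A s)" .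
  then show "X (Suc (Suc s)) i \<le> (1 - (1-phi)/2) * u + ((1-phi)/2) * A s"
    unfolding eq using K0 by (simp add: pos_divide_le_eq mult.commute)
qed

lemma Y_bound: assumes "i<n" "X (Suc s) i \<le> u" shows "Y (Suc s) i \<le> phi * u + (1-phi) * A s"
  using assms Y_step phi0 by (simp add: mult_left_mono)

lemma M_mono: "M (Suc s) \<le> M s"
proof (rule M_le)
  fix k assume k: "k<n"
  show "X (Suc (Suc s)) k \<le> M s" using X_bound(1)[OF k M_ge(1) A_le_M] .
  have "Y (Suc s) k \<le> phi * M s + (1-phi) * A s" using Y_bound[OF k M_ge(1)[OF k]] .
  also have "\<dots> \<le> phi * M s + (1-phi) * M s" using A_le_M phi1 by (simp add: mult_left_mono)
  finally show "Y (Suc s) k \<le> M s" by (simp add: algebra_simps)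
qed

lemma M_contract: assumes "\<And>i. i<n \<Longrightarrow> N (Suc s) i \<noteq> {}"
  shows "M (Suc s) \<le> (1 - (1-phi)/2) * M s + ((1-phi)/2) * A s"
proof (rule M_le)
  fix k assume k: "k<n"
  show "X (Suc (Suc s)) k \<le> (1 - (1-phi)/2) * M s + ((1-phi)/2) * A s"
    using X_bound(2)[OF k M_ge(1) A_le_M assms[OF k]] .
  have "Y (Suc s) k \<le> phi * M s + (1-phi) * A s" using Y_bound[OF k M_ge(1)[OF k]] .
  also have "\<dots> \<le> (1 - (1-phi)/2) * M s + ((1-phi)/2) * A s"
  proof -
    have "0 \<le> ((1-phi)/2) * (M s - A s)" using A_le_M phi1 by simp
    moreover have "(1 - (1-phi)/2) * M s + ((1-phi)/2) * A s - (phi * M s + (1-phi) * A s) = ((1-phi)/2) * (M s - A s)"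
      by (simp add: field_simps)
    ultimately show ?thesis by linarith
  qed
  finally show "Y (Suc s) k \<le> (1 - (1-phi)/2) * M s + ((1-phi)/2) * A s" .
qed

lemma neg: "sys n phi (\<lambda>t i. - X t i) (\<lambda>t i. - Y t i) N"
proof
  show "n \<ge> 1" "0 < phi" "phi < 1" "\<And>t i. N t i \<subseteq> {..<n}" using n1 phi0 phi1 hN by auto
  fix t i assume i: "i<n"
  show "- X (Suc t) i = (- X t i + (\<Sum>j\<in>N t i. - Y t j)) / (real (card (N t i)) + 1)"
    using hX[OF i] by (simp add: sum_negf) (simp add: add_divide_distrib diff_divide_distrib)
  show "- Y (Suc t) i = phi * - X (Suc t) i + (1 - phi) * ((\<Sum>k<n. - Y t k) / real n)"
    using hY[OF i] by (simp add: sum_negf algebra_simps)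
qed

lemma Xconst: assumes "i<n" "\<And>t. t \<ge> T \<Longrightarrow> N t i = {}" "t \<ge> T" shows "X t i = X T i"
  using assms(3)
proof (induction t rule: dec_induct)
  case base then show ?case by simp
next
  case (step m) then show ?case using X_iso[OF assms(1) assms(2)[of m]] by simp
qed


lemma consensus: assumes H: "\<And>t i. t \<ge> T \<Longrightarrow> i < n \<Longrightarrow> N t i \<noteq> {}"
  shows "\<exists>L. \<forall>k<n. (\<lambda>s. X (Suc s) k) \<longlonglongrightarrow> L \<and> (\<lambda>s. Y s k) \<longlonglongrightarrow> L"
proof -
  interpret ng: sys n phi "\<lambda>t i. - X t i" "\<lambda>t i. - Y t i" N by (rule neg)
  define c where "c = (1-phi)/2"
  have c0: "c > 0" using phi1 by (simp add: c_def)
  define V where "V s = - ng.M s" for s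
  have V_le: "V s \<le> X (Suc s) k" "V s \<le> Y s k" if "k<n" for s k
    using ng.M_ge[OF that, of s] by (auto simp: V_def)
  have ngA: "ng.A s = - A s" for s by (simp add: ng.A_def A_def sum_negf)
  have V_mono: "V s \<le> V (Suc s)" for s using ng.M_mono[of s] by (simp add: V_def)
  have V_contr: "V (Suc s) \<ge> (1-c) * V s + c * A s" if "s \<ge> T" for s
    using ng.M_contract[of s] H[of "Suc s"] that by (simp add: V_def ngA c_def)
  have M_contr: "M (Suc s) \<le> (1-c) * M s + c * A s" if "s \<ge> T" for s
    using M_contract[of s] H[of "Suc s"] that by (simp add: c_def)
  have n0: "0 < n" using n1 by simp
  have VM: "V s \<le> M s" for s
  proof -
    have "V s \<le> X (Suc s) 0" by (rule V_le(1)[OF n0])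
    also have "\<dots> \<le> M s" by (rule M_ge(1)[OF n0])
    finally show ?thesis .
  qed
  have incV: "incseq V" using V_mono by (simp add: incseq_SucI)
  have decM: "decseq M" using M_mono by (simp add: decseq_SucI)
  have "V 0 \<le> M s" for s
  proof -
    have "V 0 \<le> V s" using incV by (simp add: incseq_def)
    then show ?thesis using VM[of s] by linarith
  qed
  then obtain L1 where L1: "M \<longlonglongrightarrow> L1" using decseq_convergent[OF decM] by blast
  have "V s \<le> M 0" for s
  proof -
    have "M s \<le> M 0" using decM by (simp add: decseq_def)
    then show ?thesis using VM[of s] by linarith
  qed
  then obtain L2 where L2: "V \<longlonglongrightarrow> L2" using incseq_convergent[OF incV] by blast
  have L21: "L2 \<le> L1" by (rule LIMSEQ_le[OF L2 L1]) (use VM in auto)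
  have lim1: "(\<lambda>s. M (Suc s) - V (Suc s)) \<longlonglongrightarrow> L1 - L2"
    using tendsto_diff[OF L1 L2] filterlim_sequentially_Suc[of "\<lambda>s. M s - V s"] by simp
  have lim2: "(\<lambda>s. (1-c) * (M s - V s)) \<longlonglongrightarrow> (1-c) * (L1 - L2)"
    by (intro tendsto_mult tendsto_diff L1 L2 tendsto_const)
  have "\<forall>s\<ge>T. M (Suc s) - V (Suc s) \<le> (1-c) * (M s - V s)"
  proof (intro allI impI)
    fix s assume sT: "s \<ge> T"
    have e: "(1-c)*(M s - V s) = ((1-c) * M s + c * A s) - ((1-c) * V s + c * A s)" by (simp add: algebra_simps)
    show "M (Suc s) - V (Suc s) \<le> (1-c) * (M s - V s)" unfolding e using M_contr[OF sT] V_contr[OF sT] by linarith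
  qed
  then have "L1 - L2 \<le> (1-c) * (L1 - L2)" by (intro LIMSEQ_le[OF lim1 lim2]) blast
  then have "c * (L1 - L2) \<le> 0" by (simp add: algebra_simps)
  then have "L1 \<le> L2" using c0 by (simp add: mult_le_0_iff)
  then have L12: "L1 = L2" using L21 by simp
  show ?thesis
  proof (intro exI allI impI conjI)
    fix k assume k: "k<n"
    have L2': "V \<longlonglongrightarrow> L1" using L2 L12 by simp
    show "(\<lambda>s. X (Suc s) k) \<longlonglongrightarrow> L1"
      by (rule tendsto_sandwich[OF _ _ L2' L1]) (simp_all add: V_le[OF k] M_ge[OF k])
    show "(\<lambda>s. Y s k) \<longlonglongrightarrow> L1"
      by (rule tendsto_sandwich[OF _ _ L2' L1]) (simp_all add: V_le[OF k] M_ge[OF k])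
  qed
qed

lemma cluster_upper:
  assumes I0: "i0 \<in> I" and IN: "\<And>t i. t \<ge> T \<Longrightarrow> i < n \<Longrightarrow> (N t i = {} \<longleftrightarrow> i \<in> I)"
    and Isub: "I \<subseteq> {..<n}" and Ib: "\<And>i. i \<in> I \<Longrightarrow> X T i \<le> b"
  shows "\<exists>U. U \<longlonglongrightarrow> b \<and> (\<forall>s k. k < n \<longrightarrow> X (Suc s) k \<le> U s \<and> Y s k \<le> U s)"
proof -
  define c where "c = (1-phi)/2"
  define d where "d = c * phi / real n"
  have c0: "c > 0" "c \<le> 1 - phi" using phi1 by (auto simp: c_def)
  have n0: "0 < n" using n1 by simp
  have d0: "d > 0" using c0 phi0 n0 by (simp add: d_def)
  have d1: "d \<le> 1"
  proof -
    have "c * phi \<le> 1 * 1" using c0 phi0 phi1 by (intro mult_mono) auto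
    also have "1 * 1 \<le> real n" using n1 by simp
    finally show ?thesis using n0 by (simp add: d_def)
  qed
  have Xc: "X t i = X T i" if "i \<in> I" "t \<ge> T" for i t
  proof (rule Xconst[of i T t])
    show "i < n" using that Isub by auto
    then show "N t' i = {}" if "t' \<ge> T" for t' using IN[OF that, of i] \<open>i \<in> I\<close> by simp
  qed (use that in simp)
  define U where "U s = max b (M s)" for s
  have decU: "decseq U"
  proof (rule decseq_SucI)
    fix s show "U (Suc s) \<le> U s" using M_mono[of s] unfolding U_def by linarith
  qed
  have Ub: "b \<le> U s" for s by (simp add: U_def)
  obtain L where L: "U \<longlonglongrightarrow> L" using decseq_convergent[OF decU] Ub by blast
  have Lb: "b \<le> L" by (rule LIMSEQ_le_const[OF L]) (use Ub in blast)
  have two: "U (Suc (Suc s)) \<le> U s - d * (U s - b)" if sT: "s \<ge> T" for s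
  proof -
    define u where "u = U s"
    have ub: "b \<le> u" by (simp add: u_def Ub)
    have Ms: "M s \<le> u" by (simp add: u_def U_def)
    have M1: "M (Suc s) \<le> u" using M_mono[of s] Ms by simp
    have As: "A s \<le> u" using A_le_M[of s] Ms by simp
    have i0n: "i0 < n" using I0 Isub by auto
    have sumX: "(\<Sum>k<n. X (Suc s) k) \<le> real n * u - (u - b)"
    proof -
      have "X (Suc s) i0 \<le> b" using Xc[OF I0, of "Suc s"] Ib[OF I0] sT by simp
      then have "u - b \<le> u - X (Suc s) i0" by simp
      also have "\<dots> \<le> (\<Sum>k<n. u - X (Suc s) k)"
      proof (rule member_le_sum[of i0 "{..<n}" "\<lambda>k. u - X (Suc s) k"])
        fix k assume "k \<in> {..<n} - {i0}"
        then have "X (Suc s) k \<le> u" using M_ge(1)[of k s] Ms by simp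
        then show "0 \<le> u - X (Suc s) k" by simp
      qed (use i0n in auto)
      also have "\<dots> = real n * u - (\<Sum>k<n. X (Suc s) k)" by (simp add: sum_subtractf)
      finally show ?thesis by simp
    qed
    have sumY: "(\<Sum>k<n. Y (Suc s) k) = phi * (\<Sum>k<n. X (Suc s) k) + real n * ((1-phi) * A s)"
      by (simp add: Y_step sum.distrib sum_distrib_left)
    have "(\<Sum>k<n. Y (Suc s) k) \<le> phi * (real n * u - (u - b)) + real n * ((1-phi) * u)"
      unfolding sumY using sumX As phi0 phi1
      by (intro add_mono mult_left_mono) auto
    also have "\<dots> = real n * (u - phi * (u - b) / real n)" using n0 by (simp add: field_simps)
    finally have A1: "A (Suc s) \<le> u - phi * (u - b) / real n"
      unfolding A_def using n0 by (simp add: pos_divide_le_eq mult.commute)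
    have A1u: "A (Suc s) \<le> u"
    proof -
      have "0 \<le> phi * (u - b) / real n" using phi0 ub by simp
      then show ?thesis using A1 by linarith
    qed
    have key: "(1-c) * u + c * (u - phi * (u - b) / real n) = u - d * (u - b)"
      using n0 by (simp add: d_def field_simps)
    have "M (Suc (Suc s)) \<le> u - d * (u - b)"
    proof (rule M_le)
      fix k assume k: "k<n"
      show "X (Suc (Suc (Suc s))) k \<le> u - d * (u - b)"
      proof (cases "k \<in> I")
        case True
        then have "X (Suc (Suc (Suc s))) k \<le> b" using Xc[OF True, of "Suc (Suc (Suc s))"] Ib sT by simp
        moreover have "0 \<le> (1 - d) * (u - b)" using d1 ub by simp
        ultimately show ?thesis by (simp add: algebra_simps)
      next
        case False
        then have ne: "N (Suc (Suc s)) k \<noteq> {}" using IN[of "Suc (Suc s)" k] k sT by simp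
        have "X (Suc (Suc (Suc s))) k \<le> (1-c) * u + c * A (Suc s)"
        proof -
          have "X (Suc (Suc s)) j \<le> u" if "j<n" for j using M_ge(1)[OF that, of "Suc s"] M1 by simp
          then show ?thesis using X_bound(2)[OF k _ A1u ne] unfolding c_def by blast
        qed
        also have "\<dots> \<le> (1-c) * u + c * (u - phi * (u - b) / real n)"
          using A1 c0 by simp
        finally show ?thesis using key by simp
      qed
      have "Y (Suc (Suc s)) k \<le> phi * u + (1-phi) * A (Suc s)"
      proof -
        have "X (Suc (Suc s)) k \<le> u" using M_ge(1)[OF k, of "Suc s"] M1 by simp
        then show ?thesis using Y_bound[OF k] by blast
      qed
      also have "\<dots> \<le> phi * u + (1-phi) * (u - phi * (u - b) / real n)"
        using A1 phi1 by simp
      also have "\<dots> = u - (1-phi) * (phi * (u - b) / real n)" by (simp add: algebra_simps)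
      also have "\<dots> \<le> u - c * (phi * (u - b) / real n)"
      proof -
        have "0 \<le> phi * (u - b) / real n" using phi0 ub by simp
        then have "c * (phi * (u - b) / real n) \<le> (1-phi) * (phi * (u - b) / real n)"
          using c0 by (intro mult_right_mono) auto
        then show ?thesis by linarith
      qed
      also have "\<dots> = u - d * (u - b)" by (simp add: d_def)
      finally show "Y (Suc (Suc s)) k \<le> u - d * (u - b)" .
    qed
    moreover have "b \<le> u - d * (u - b)"
    proof -
      have "0 \<le> (1 - d) * (u - b)" using d1 ub by simp
      then show ?thesis by (simp add: algebra_simps)
    qed
    ultimately show ?thesis by (simp add: U_def u_def)
  qed
  have lim1: "(\<lambda>s. U (Suc (Suc s))) \<longlonglongrightarrow> L"
    using L filterlim_sequentially_Suc[of "\<lambda>s. U (Suc s)"] filterlim_sequentially_Suc[of U] by simp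
  have lim2: "(\<lambda>s. U s - d * (U s - b)) \<longlonglongrightarrow> L - d * (L - b)"
    by (intro tendsto_intros L)
  have "L \<le> L - d * (L - b)" by (rule LIMSEQ_le[OF lim1 lim2]) (use two in blast)
  then have "d * (L - b) \<le> 0" by simp
  then have "L \<le> b" using d0 by (simp add: mult_le_0_iff)
  then have "L = b" using Lb by simp
  moreover have "X (Suc s) k \<le> U s \<and> Y s k \<le> U s" if "k<n" for s k
    using M_ge[OF that, of s] unfolding U_def by linarith
  ultimately show ?thesis using L by blast
qed

end

lemma sys_inst:
  assumes "n \<ge> 1" "0 < phi" "phi < 1"
  shows "sys n phi (xs n eps phi x0 y0) (ys n eps phi x0 y0)
           (\<lambda>t. nbrs n eps (xs n eps phi x0 y0 t) (ys n eps phi x0 y0 t))"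
proof
  show "n \<ge> 1" "0 < phi" "phi < 1" using assms by auto
  show "\<And>t i. nbrs n eps (xs n eps phi x0 y0 t) (ys n eps phi x0 y0 t) i \<subseteq> {..<n}"
    by (auto simp: nbrs_def)
  fix t i assume "i < n"
  show "xs n eps phi x0 y0 (Suc t) i =
        (xs n eps phi x0 y0 t i + (\<Sum>j\<in>nbrs n eps (xs n eps phi x0 y0 t) (ys n eps phi x0 y0 t) i. ys n eps phi x0 y0 t j)) /
        (real (card (nbrs n eps (xs n eps phi x0 y0 t) (ys n eps phi x0 y0 t) i)) + 1)"
    by (simp add: xs_def ys_def step_def Let_def)
  show "ys n eps phi x0 y0 (Suc t) i =
        phi * xs n eps phi x0 y0 (Suc t) i + (1 - phi) * ((\<Sum>k<n. ys n eps phi x0 y0 t k) / real n)"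
    by (simp add: xs_def ys_def step_def Let_def)
qed

lemma P_yx: "i<n \<Longrightarrow> Pmat n eps phi x0 y0 t (n+i) i = phi"
  by (simp add: Pmat_def Let_def)

lemma P_xy:
  assumes "i<n" "j \<in> nbrs n eps (xs n eps phi x0 y0 t) (ys n eps phi x0 y0 t) i" "0 < phi" "phi < 1"
  shows "0 < Pmat n eps phi x0 y0 t i (n+j)"
proof -
  let ?N = "nbrs n eps (xs n eps phi x0 y0 t) (ys n eps phi x0 y0 t) i"
  have fin: "finite ?N" by (rule finite_subset[of _ "{..<n}"]) (auto simp: nbrs_def)
  then have "card ?N > 0" using assms(2) card_gt_0_iff by blast
  moreover have "j < n" using assms(2) by (simp add: nbrs_def)
  ultimately show ?thesis using assms by (simp add: Pmat_def Let_def)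
qed

lemma P_iso:
  assumes "i<n" "nbrs n eps (xs n eps phi x0 y0 t) (ys n eps phi x0 y0 t) i = {}" "k < 2*n"
    "0 < Pmat n eps phi x0 y0 t i k"
  shows "k = i"
  using assms by (auto simp: Pmat_def Let_def split: if_splits)

lemma G_iso:
  assumes "i<n" "nbrs n eps (xs n eps phi x0 y0 t) (ys n eps phi x0 y0 t) i = {}"
    "(a, b) \<in> (gedges (Pmat n eps phi x0 y0 t) (2*n))\<^sup>*" "b = i"
  shows "a = i"
  using assms(3,4)
proof (induction arbitrary: rule: rtrancl_induct)
  case base then show ?case by simp
next
  case (step y z)
  then have "y < 2*n" "0 < Pmat n eps phi x0 y0 t i y" by (auto simp: gedges_def)
  then have "y = i" using P_iso[OF assms(1,2)] by blast
  then show ?case using step by simp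
qed

lemma scc_self: "k < m \<Longrightarrow> k \<in> scc_of A m k" by (simp add: scc_of_def)
lemma scc_in: "scc_of A m k \<in> sccs A m \<longleftrightarrow> True" if "k<m" using that by (simp add: sccs_def)
lemma sccs_sub: "S \<in> sccs A m \<Longrightarrow> x \<in> S \<Longrightarrow> x < m" by (auto simp: sccs_def scc_of_def)

lemma hull_infdist:
  fixes a b v u w :: real
  assumes "a \<in> S" "b \<in> S" "convex S" "a \<le> b" "v \<le> u" "- v \<le> w"
  shows "infdist v S \<le> \<bar>u - b\<bar> + \<bar>w + a\<bar>"
proof (cases "v > b")
  case True
  then have "infdist v S \<le> dist v b" using infdist_le[OF assms(2)] by blast
  then show ?thesis using True assms by (simp add: dist_real_def)
next
  case False
  show ?thesis
  proof (cases "v < a")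
    case True
    then have "infdist v S \<le> dist v a" using infdist_le[OF assms(1)] by blast
    then show ?thesis using True assms by (simp add: dist_real_def)
  next
    case F2: False
    have "v \<in> S" using connectedD_interval[OF convex_connected[OF assms(3)] assms(1,2)] False F2 by simp
    then show ?thesis by simp
  qed
qed


theorem theorem3:
  fixes n :: nat and eps phi :: real and x0 y0 :: "nat \<Rightarrow> real" and T :: nat
  defines "P \<equiv> Pmat n eps phi x0 y0"
      and "z \<equiv> zaug n eps phi x0 y0"
  assumes n: "n \<ge> 1"
      and eps: "0 \<le> eps" "eps \<le> 1"
      and phi: "0 < phi" "phi < 1"
      and init: "\<And>i. i < n \<Longrightarrow> 0 \<le> x0 i \<and> x0 i \<le> 1 \<and> 0 \<le> y0 i \<and> y0 i \<le> 1"
      and T: "T > 0"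
      and stab: "\<And>t. t \<ge> T \<Longrightarrow> sccs (P t) (2 * n) = sccs (P T) (2 * n)"
  shows "((\<forall>t\<ge>T. strongly_connected_mat (P t) (2 * n)) \<longrightarrow>
            (\<exists>c. \<forall>i<2 * n. (\<lambda>t. z t i) \<longlonglongrightarrow> c))
       \<and> (\<forall>\<Omega>. (\<forall>t\<ge>T. one_sink_singleton_sources (P t) (2 * n) \<Omega>) \<longrightarrow>
            (let \<Theta> = \<Union>(sccs (P T) (2 * n) - {\<Omega>}) in
              (\<forall>i\<in>\<Theta>. \<forall>t\<ge>T. z t i = z T i) \<and>
              (\<forall>j\<in>\<Omega>. (\<lambda>t. infdist (z t j) (convex hull {z T i | i. i \<in> \<Theta>})) \<longlonglongrightarrow> 0)))"
proof -
  define X where "X = xs n eps phi x0 y0"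
  define Y where "Y = ys n eps phi x0 y0"
  define N where "N t = nbrs n eps (X t) (Y t)" for t
  interpret S: sys n phi X Y N unfolding X_def Y_def N_def using sys_inst[OF n phi] .
  interpret NS: sys n phi "\<lambda>t i. - X t i" "\<lambda>t i. - Y t i" N by (rule S.neg)
  have zS: "z (Suc s) k = (if k < n then X (Suc s) k else Y s (k - n))" for s k
    by (simp add: z_def zaug_def X_def Y_def)
  have zT: "z t k = X t k" if "k<n" for t k using that by (simp add: z_def zaug_def X_def)
  have Pyx: "P t (n+i) i = phi" if "i<n" for t i unfolding P_def using P_yx[OF that] .
  have Pxy: "0 < P t i (n+j)" if "i<n" "j \<in> N t i" for t i j
    unfolding P_def using P_xy[of i n j eps phi x0 y0 t] that phi by (simp add: N_def X_def Y_def)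
  have Giso: "a = i" if "i<n" "N t i = {}" "(a, i) \<in> (gedges (P t) (2*n))\<^sup>*" for a i t
    using G_iso[of i n eps phi x0 y0 t a i] that by (simp add: N_def X_def Y_def P_def)
  have part1: "(\<forall>t\<ge>T. strongly_connected_mat (P t) (2 * n)) \<longrightarrow> (\<exists>c. \<forall>i<2 * n. (\<lambda>t. z t i) \<longlonglongrightarrow> c)"
  proof
    assume sc: "\<forall>t\<ge>T. strongly_connected_mat (P t) (2 * n)"
    have ne: "N t i \<noteq> {}" if "t \<ge> T" "i < n" for t i
    proof
      assume e: "N t i = {}"
      have "(n, i) \<in> (gedges (P t) (2*n))\<^sup>*" using sc that n unfolding strongly_connected_mat_def by auto
      then have "n = i" using Giso[OF that(2) e] by blast
      then show False using that by simp
    qed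
    obtain L where L: "\<forall>k<n. (\<lambda>s. X (Suc s) k) \<longlonglongrightarrow> L \<and> (\<lambda>s. Y s k) \<longlonglongrightarrow> L"
      using S.consensus[of T] ne by blast
    have "(\<lambda>t. z t i) \<longlonglongrightarrow> L" if "i < 2*n" for i
    proof -
      have "(\<lambda>s. z (Suc s) i) \<longlonglongrightarrow> L"
      proof (cases "i < n")
        case True then show ?thesis using L by (simp add: zS)
      next
        case False then have "i - n < n" using that by simp
        then show ?thesis using L False by (simp add: zS)
      qed
      then show ?thesis using filterlim_sequentially_Suc[of "\<lambda>t. z t i"] by simp
    qed
    then show "\<exists>c. \<forall>i<2 * n. (\<lambda>t. z t i) \<longlonglongrightarrow> c" by blast
  qed
  have part2: "(let \<Theta> = \<Union>(sccs (P T) (2 * n) - {\<Omega>}) in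
              (\<forall>i\<in>\<Theta>. \<forall>t\<ge>T. z t i = z T i) \<and>
              (\<forall>j\<in>\<Omega>. (\<lambda>t. infdist (z t j) (convex hull {z T i | i. i \<in> \<Theta>})) \<longlonglongrightarrow> 0))"
    if H: "\<forall>t\<ge>T. one_sink_singleton_sources (P t) (2 * n) \<Omega>" for \<Omega>
  proof -
    define Th where "Th = \<Union>(sccs (P T) (2 * n) - {\<Omega>})"
    have Ht: "one_sink_singleton_sources (P t) (2 * n) \<Omega>" if "t \<ge> T" for t using H that by blast
    have HT: "\<Omega> \<in> sccs (P T) (2 * n)" "\<exists>S\<in>sccs (P T) (2 * n). S \<noteq> \<Omega>"
      "\<And>S. S \<in> sccs (P T) (2 * n) \<Longrightarrow> S \<noteq> \<Omega> \<Longrightarrow> card S = 1"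
      using Ht[of T] unfolding one_sink_singleton_sources_def by simp_all
    have Hsrc: "cond_source (P t) (2 * n) S" if "t \<ge> T" "S \<in> sccs (P t) (2 * n)" "S \<noteq> \<Omega>" for t S
      using Ht[OF that(1)] that(2,3) unfolding one_sink_singleton_sources_def by simp
    have Hsink: "cond_sink (P t) (2 * n) \<Omega>" if "t \<ge> T" for t
      using Ht[OF that] unfolding one_sink_singleton_sources_def by simp
    have Th1: "i < n \<and> (\<forall>t\<ge>T. N t i = {})" if iT: "i \<in> Th" for i
    proof -
      obtain Sc where Sc: "Sc \<in> sccs (P T) (2*n)" "Sc \<noteq> \<Omega>" "i \<in> Sc" using iT by (auto simp: Th_def)
      have "card Sc = 1" using HT(3) Sc by simp
      then have Si: "Sc = {i}" using Sc(3) by (auto simp: card_1_singleton_iff)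
      have i2: "i < 2*n" using sccs_sub[OF Sc(1,3)] .
      have src: "cond_source (P t) (2*n) Sc" if "t \<ge> T" for t
        using Hsrc[OF that _ Sc(2)] Sc(1) stab[OF that] by simp
      have in_t: "scc_of (P t) (2*n) k \<in> sccs (P t) (2*n)" if "k < 2*n" for t k
        using that by (simp add: sccs_def)
      have il: "i < n"
      proof (rule ccontr)
        assume "\<not> i < n"
        define k where "k = i - n"
        have k: "k < n" "i = n + k" using i2 \<open>\<not> i < n\<close> by (auto simp: k_def)
        have "cond_edge (P T) (2*n) (scc_of (P T) (2*n) k) Sc"
          unfolding cond_edge_def
        proof
          show "scc_of (P T) (2 * n) k \<noteq> Sc" using scc_self[of k "2*n" "P T"] k Si by auto
          show "\<exists>a\<in>scc_of (P T) (2 * n) k. \<exists>b\<in>Sc. (a, b) \<in> gedges (P T) (2 * n)"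
          proof -
            have "(k, i) \<in> gedges (P T) (2*n)" using k Pyx[of k T] phi by (simp add: gedges_def)
            moreover have "k \<in> scc_of (P T) (2 * n) k" using scc_self[of k "2*n" "P T"] k by simp
            ultimately show ?thesis using Si by blast
          qed
        qed
        then show False using src[of T] in_t[of k T] k unfolding cond_source_def by auto
      qed
      have "N t i = {}" if tT: "t \<ge> T" for t
      proof (rule ccontr)
        assume "N t i \<noteq> {}"
        then obtain j where j: "j \<in> N t i" by blast
        have jn: "j < n" using j S.hN by blast
        have "cond_edge (P t) (2*n) (scc_of (P t) (2*n) (n+j)) Sc"
          unfolding cond_edge_def
        proof
          show "scc_of (P t) (2 * n) (n+j) \<noteq> Sc" using scc_self[of "n+j" "2*n" "P t"] jn il Si by auto
          show "\<exists>a\<in>scc_of (P t) (2 * n) (n+j). \<exists>b\<in>Sc. (a, b) \<in> gedges (P t) (2 * n)"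
            using scc_self[of "n+j" "2*n" "P t"] jn il Si Pxy[OF il j] by (auto simp: gedges_def)
        qed
        then show False using src[OF tT] in_t[of "n+j" t] jn unfolding cond_source_def by auto
      qed
      then show ?thesis using il by blast
    qed
    have Th2: "i \<in> Th" if "t \<ge> T" "i < n" "N t i = {}" for t i
    proof -
      have sc: "scc_of (P t) (2*n) i = {i}"
      proof (intro equalityI subsetI)
        fix j assume "j \<in> scc_of (P t) (2*n) i"
        then have "(j, i) \<in> (gedges (P t) (2*n))\<^sup>*" by (simp add: scc_of_def)
        then show "j \<in> {i}" using Giso[OF that(2,3)] by blast
      next
        fix j assume "j \<in> {i}" then show "j \<in> scc_of (P t) (2*n) i"
          using scc_self[of i "2*n" "P t"] that(2) by simp
      qed
      have "scc_of (P t) (2*n) i \<in> sccs (P t) (2*n)" using that(2) by (simp add: sccs_def)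
      then have "{i} \<in> sccs (P t) (2*n)" using sc by simp
      then have inT: "{i} \<in> sccs (P T) (2*n)" using stab[OF that(1)] by simp
      have "{i} \<noteq> \<Omega>"
      proof
        assume eq: "{i} = \<Omega>"
        have sink: "cond_sink (P t) (2*n) \<Omega>" using Hsink that(1) by blast
        have m1: "n+i \<in> scc_of (P t) (2 * n) (n+i)" using scc_self[of "n+i" "2*n" "P t"] that(2) by simp
        have e1: "(i, n+i) \<in> gedges (P t) (2*n)" using that(2) Pyx[OF that(2), of t] phi by (simp add: gedges_def)
        have ne1: "{i} \<noteq> scc_of (P t) (2 * n) (n+i)"
        proof
          assume "{i} = scc_of (P t) (2 * n) (n+i)"
          with m1 have "n+i \<in> {i}" by simp
          then show False using n by simp
        qed
        have ce: "cond_edge (P t) (2*n) {i} (scc_of (P t) (2*n) (n+i))"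
          unfolding cond_edge_def using ne1 m1 e1 by blast
        have ins: "scc_of (P t) (2*n) (n+i) \<in> sccs (P t) (2*n)" using that(2) by (simp add: sccs_def)
        have nce: "\<not> cond_edge (P t) (2*n) \<Omega> (scc_of (P t) (2*n) (n+i))"
          using sink ins unfolding cond_sink_def by blast
        show False using ce nce eq by simp
      qed
      then show ?thesis unfolding Th_def using inT by blast
    qed
    obtain i0 where i0: "i0 \<in> Th"
    proof -
      obtain Sc where Sc: "Sc \<in> sccs (P T) (2*n)" "Sc \<noteq> \<Omega>"
        using HT(2) by blast
      then obtain k where "k < 2*n" "Sc = scc_of (P T) (2*n) k" by (auto simp: sccs_def)
      then have "k \<in> Sc" using scc_self by simp
      then have "k \<in> Th" unfolding Th_def using Sc by blast
      then show ?thesis by (rule that)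
    qed
    have Thsub: "Th \<subseteq> {..<n}" using Th1 by auto
    have IN: "(N t i = {} \<longleftrightarrow> i \<in> Th)" if "t \<ge> T" "i < n" for t i
      using Th1 Th2 that by blast
    have c1: "\<forall>i\<in>Th. \<forall>t\<ge>T. z t i = z T i"
    proof (intro ballI allI impI)
      fix i t assume i: "i \<in> Th" and t: "T \<le> t"
      have "X t i = X T i" using S.Xconst[of i T t] Th1[OF i] t by blast
      then show "z t i = z T i" using Th1[OF i] zT by simp
    qed
    define Hs where "Hs = {z T i | i. i \<in> Th}"
    have HsX: "Hs = X T ` Th"
    proof (intro equalityI subsetI)
      fix v assume "v \<in> Hs"
      then obtain i where "v = z T i" "i \<in> Th" by (auto simp: Hs_def)
      then show "v \<in> X T ` Th" using zT Thsub by auto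
    next
      fix v assume "v \<in> X T ` Th"
      then obtain i where "v = X T i" "i \<in> Th" by auto
      then have "v = z T i" using zT Thsub by auto
      then show "v \<in> Hs" using \<open>i \<in> Th\<close> by (auto simp: Hs_def)
    qed
    have finH: "finite Hs" using Thsub HsX by (simp add: finite_subset)
    have neH: "Hs \<noteq> {}" using i0 HsX by auto
    define b where "b = Max Hs"
    define a where "a = Min Hs"
    have bH: "b \<in> Hs" "a \<in> Hs" using finH neH by (simp_all add: b_def a_def)
    have ab: "a \<le> b" using finH neH bH by (simp add: a_def b_def)
    have Xb: "X T i \<le> b" "a \<le> X T i" if "i \<in> Th" for i
      using finH that HsX by (auto simp: a_def b_def)
    obtain U where U: "U \<longlonglongrightarrow> b" "\<forall>s k. k < n \<longrightarrow> X (Suc s) k \<le> U s \<and> Y s k \<le> U s"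
    proof -
      have "\<exists>U. U \<longlonglongrightarrow> b \<and> (\<forall>s k. k < n \<longrightarrow> X (Suc s) k \<le> U s \<and> Y s k \<le> U s)"
      proof (rule S.cluster_upper[OF i0 IN Thsub, where b=b and T=T])
        fix i assume "i \<in> Th"
        then show "X T i \<le> b" by (rule Xb(1))
      qed
      then show ?thesis using that by blast
    qed
    obtain U' where U': "U' \<longlonglongrightarrow> - a" "\<forall>s k. k < n \<longrightarrow> - X (Suc s) k \<le> U' s \<and> - Y s k \<le> U' s"
    proof -
      have "\<exists>U'. U' \<longlonglongrightarrow> - a \<and> (\<forall>s k. k < n \<longrightarrow> - X (Suc s) k \<le> U' s \<and> - Y s k \<le> U' s)"
      proof (rule NS.cluster_upper[OF i0 IN Thsub, where b="- a" and T=T])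
        fix i assume "i \<in> Th"
        then have "a \<le> X T i" by (rule Xb(2))
        then show "- X T i \<le> - a" by simp
      qed
      then show ?thesis using that by blast
    qed
    have cvx: "convex (convex hull Hs)" by (rule convex_convex_hull)
    have abh: "a \<in> convex hull Hs" "b \<in> convex hull Hs" by (rule hull_inc[OF bH(2)], rule hull_inc[OF bH(1)])
    have c2: "(\<lambda>t. infdist (z t j) (convex hull Hs)) \<longlonglongrightarrow> 0" if j: "j < 2*n" for j
    proof -
      have bnd: "infdist (z (Suc s) j) (convex hull Hs) \<le> \<bar>U s - b\<bar> + \<bar>U' s + a\<bar>" for s
      proof (rule hull_infdist[OF abh cvx ab])
        show "z (Suc s) j \<le> U s" "- z (Suc s) j \<le> U' s"
        proof -
          have "z (Suc s) j \<le> U s \<and> - z (Suc s) j \<le> U' s"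
          proof (cases "j < n")
            case True
            have "X (Suc s) j \<le> U s" "- X (Suc s) j \<le> U' s" using U(2) U'(2) True by blast+
            moreover have "z (Suc s) j = X (Suc s) j" using True zS by presburger
            ultimately show ?thesis by simp
          next
            case False then have jn: "j - n < n" using j by simp
            have "Y s (j - n) \<le> U s" "- Y s (j - n) \<le> U' s" using U(2) U'(2) jn by blast+
            moreover have "z (Suc s) j = Y s (j - n)" using False zS by presburger
            ultimately show ?thesis by simp
          qed
          then show "z (Suc s) j \<le> U s" "- z (Suc s) j \<le> U' s" by auto
        qed
      qed
      have l0: "(\<lambda>s. \<bar>U s - b\<bar> + \<bar>U' s + a\<bar>) \<longlonglongrightarrow> \<bar>b - b\<bar> + \<bar>- a + a\<bar>"
        by (intro tendsto_intros U(1) U'(1))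
      then have l0': "(\<lambda>s. \<bar>U s - b\<bar> + \<bar>U' s + a\<bar>) \<longlonglongrightarrow> 0" by simp
      have "(\<lambda>s. infdist (z (Suc s) j) (convex hull Hs)) \<longlonglongrightarrow> 0"
        by (rule tendsto_sandwich[OF _ _ tendsto_const l0']) (simp_all add: bnd infdist_nonneg)
      then show ?thesis using filterlim_sequentially_Suc[of "\<lambda>t. infdist (z t j) (convex hull Hs)"] by simp
    qed
    have "\<forall>j\<in>\<Omega>. (\<lambda>t. infdist (z t j) (convex hull Hs)) \<longlonglongrightarrow> 0"
    proof
      fix j assume "j \<in> \<Omega>"
      moreover have "\<Omega> \<in> sccs (P T) (2*n)" using HT(1) by blast
      ultimately have "j < 2*n" using sccs_sub by blast
      then show "(\<lambda>t. infdist (z t j) (convex hull Hs)) \<longlonglongrightarrow> 0" by (rule c2)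
    qed
    then have g2: "\<forall>j\<in>\<Omega>. (\<lambda>t. infdist (z t j) (convex hull {z T i | i. i \<in> Th})) \<longlonglongrightarrow> 0"
      by (simp only: Hs_def)
    show ?thesis unfolding Th_def[symmetric] Let_def using c1 g2 by blast
  qed
  show ?thesis using part1 part2 by blast
qed

end
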